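(* Let $\theta^1,\theta^2\in[0,\infty)^{s_0}$. Suppose the balance equation (B) holds for $\theta^1$, for $\theta^2$, and for $\theta^1-\frac{\theta^1\cdot\zeta_k}{\theta^2\cdot\zeta_k}\theta^2$ for every $k\in(\Gamma_{\theta^1}^+\cap\Gamma_{\theta^2}^-)\cup(\Gamma_{\theta^1}^-\cap\Gamma_{\theta^2}^+)$ (for such $k$ the coefficient $-\frac{\theta^1\cdot\zeta_k}{\theta^2\cdot\zeta_k}$ is positive). Then (B) holds for $c_1\theta^1+c_2\theta^2$ for all $c_1,c_2>0$.
   Context: Fix integers $s_0,r_0\ge 1$ and, for $k=1,\dots,r_0$, vectors $\nu_k,\nu_k'\in\mathbb{N}^{s_0}$ (reactant and product vectors of reaction $k$); set $\zeta_k=\nu_k'-\nu_k$. Fix $\alpha\in[0,\infty)^{s_0}$ and $\beta\in\mathbb{R}^{r_0}$ and set $\rho_k=\beta_k+\nu_k\cdot\alpha$. For $\theta\in[0,\infty)^{s_0}$ let $\Gamma_\theta^+=\{k:\theta\cdot\zeta_k>0\}$, $\Gamma_\theta^-=\{k:\theta\cdot\zeta_k<0\}$ and $\mathrm{supp}(\theta)=\{i:\theta_i>0\}$. A maximum over the empty set is $-\infty$. For $\theta\in[0,\infty)^{s_0}$ and $\gamma\in\mathbb{R}$: the balance equation for $\theta$ is (B) $\max_{k\in\Gamma_\theta^-}\rho_k=\max_{k\in\Gamma_\theta^+}\rho_k$; the time-scale constraint for $\theta$ at $\gamma$ is (T) $\gamma\le\max_{i:\theta_i>0}\alpha_i-\max_{k\in\Gamma_\theta^+\cup\Gamma_\theta^-}\rho_k$;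 Condition 3.2 holds for $\theta$ at $\gamma$ if (B) or (T) holds. *)

theory Defs
  imports "HOL-Library.Extended_Real"
begin

text \<open>Vectors in R^{s0} are functions nat => real, only the entries with index < s0 matter.
  Reactions are indexed by k < r0; nu k i and nu' k i are the reactant/product coefficients.\<close>

definition dotp :: "nat \<Rightarrow> (nat \<Rightarrow> real) \<Rightarrow> (nat \<Rightarrow> real) \<Rightarrow> real" where
  "dotp s0 x y = (\<Sum>i<s0. x i * y i)"

definition zeta :: "(nat \<Rightarrow> nat \<Rightarrow> nat) \<Rightarrow> (nat \<Rightarrow> nat \<Rightarrow> nat) \<Rightarrow> nat \<Rightarrow> nat \<Rightarrow> real" where
  "zeta nu nu' k i = real (nu' k i) - real (nu k i)"

definition rho :: "nat \<Rightarrow> (nat \<Rightarrow> nat \<Rightarrow> nat) \<Rightarrow> (nat \<Rightarrow> real) \<Rightarrow> (nat \<Rightarrow> real) \<Rightarrow> nat \<Rightarrow> real" where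
  "rho s0 nu alpha beta k = beta k + dotp s0 (\<lambda>i. real (nu k i)) alpha"

definition Gamma_plus :: "nat \<Rightarrow> nat \<Rightarrow> (nat \<Rightarrow> nat \<Rightarrow> nat) \<Rightarrow> (nat \<Rightarrow> nat \<Rightarrow> nat) \<Rightarrow> (nat \<Rightarrow> real) \<Rightarrow> nat set" where
  "Gamma_plus s0 r0 nu nu' \<theta> = {k. k < r0 \<and> dotp s0 \<theta> (zeta nu nu' k) > 0}"

definition Gamma_minus :: "nat \<Rightarrow> nat \<Rightarrow> (nat \<Rightarrow> nat \<Rightarrow> nat) \<Rightarrow> (nat \<Rightarrow> nat \<Rightarrow> nat) \<Rightarrow> (nat \<Rightarrow> real) \<Rightarrow> nat set" where
  "Gamma_minus s0 r0 nu nu' \<theta> = {k. k < r0 \<and> dotp s0 \<theta> (zeta nu nu' k) < 0}"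

text \<open>Maximum over a finite set with value in ereal; the supremum of the empty set is -\<infinity>.\<close>
definition balance :: "nat \<Rightarrow> nat \<Rightarrow> (nat \<Rightarrow> nat \<Rightarrow> nat) \<Rightarrow> (nat \<Rightarrow> nat \<Rightarrow> nat) \<Rightarrow>
    (nat \<Rightarrow> real) \<Rightarrow> (nat \<Rightarrow> real) \<Rightarrow> (nat \<Rightarrow> real) \<Rightarrow> bool" where
  "balance s0 r0 nu nu' alpha beta \<theta> \<longleftrightarrow>
     (SUP k\<in>Gamma_minus s0 r0 nu nu' \<theta>. ereal (rho s0 nu alpha beta k)) =
     (SUP k\<in>Gamma_plus s0 r0 nu nu' \<theta>. ereal (rho s0 nu alpha beta k))"

end

theory Submission
  imports Defs
begin

lemma step_fin:
  fixes a b s t u :: real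
  assumes "0 \<le> s" "s < t" "t < u"
    and nc: "(a > 0 \<and> b < 0) \<or> (a < 0 \<and> b > 0) \<Longrightarrow> -a/b \<notin> {s<..<u}"
  shows "a + t*b > 0 \<longleftrightarrow> a + s*b > 0 \<or> a + u*b > 0"
proof (cases "b = 0")
  case True then show ?thesis by simp
next
  case False
  show ?thesis
  proof (cases "b > 0")
    case True
    have 1: "a + s*b < a + t*b" "a + t*b < a + u*b" using True assms(2,3) by simp_all
    have "a + t*b > 0" if h: "a + u*b > 0"
    proof (rule ccontr)
      assume "\<not> a + t*b > 0"
      hence "a \<le> -t*b" by simp
      have "t*b > 0" using True assms(1,2) by simp
      hence "a < 0" using \<open>a \<le> -t*b\<close> by linarith
      hence "-a/b \<notin> {s<..<u}" using nc True by blast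
      moreover have "-a/b \<ge> t" using \<open>a \<le> -t*b\<close> True by (simp add: field_simps)
      moreover have "-a/b < u" using h True by (simp add: field_simps)
      ultimately show False using assms(2) by auto
    qed
    then show ?thesis using 1 by linarith
  next
    case False
    hence bn: "b < 0" using \<open>b \<noteq> 0\<close> by simp
    have 1: "a + s*b > a + t*b" "a + t*b > a + u*b" using bn assms(2,3) by simp_all
    have "a + t*b > 0" if h: "a + s*b > 0"
    proof (rule ccontr)
      assume "\<not> a + t*b > 0"
      hence "a \<le> -t*b" by simp
      have "s*b \<le> 0" using bn assms(1) by (simp add: mult_nonneg_nonpos)
      hence "a > 0" using h by linarith
      hence "-a/b \<notin> {s<..<u}" using nc bn by blast
      moreover have "-a/b \<le> t" using \<open>a \<le> -t*b\<close> bn by (simp add: field_simps)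
      moreover have "-a/b > s" using h bn by (simp add: field_simps)
      ultimately show False using assms(3) by auto
    qed
    then show ?thesis using 1 by linarith
  qed
qed

lemma step_inf:
  fixes a b s t :: real
  assumes "0 \<le> s" "s < t"
    and nc: "(a > 0 \<and> b < 0) \<or> (a < 0 \<and> b > 0) \<Longrightarrow> -a/b \<notin> {s<..}"
  shows "a + t*b > 0 \<longleftrightarrow> a + s*b > 0 \<or> b > 0"
proof (cases "b > 0")
  case True
  have "a + t*b > 0"
  proof (rule ccontr)
    assume "\<not> a + t*b > 0"
    hence "a \<le> -t*b" by simp
    have "t*b > 0" using True assms(1,2) by simp
    hence "a < 0" using \<open>a \<le> -t*b\<close> by linarith
    hence "-a/b \<notin> {s<..}" using nc True by blast
    moreover have "-a/b \<ge> t" using \<open>a \<le> -t*b\<close> True by (simp add: field_simps)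
    ultimately show False using assms(2) by auto
  qed
  then show ?thesis using True by simp
next
  case False
  hence bn: "b \<le> 0" by simp
  have 1: "a + s*b \<ge> a + t*b" using bn assms(2) by (simp add: mult_right_mono_neg)
  have "a + t*b > 0" if h: "a + s*b > 0"
  proof (rule ccontr)
    assume "\<not> a + t*b > 0"
    hence "a \<le> -t*b" by simp
    hence bn': "b < 0" using h bn by (cases "b = 0") auto
    have "s*b \<le> 0" using bn assms(1) by (simp add: mult_nonneg_nonpos)
    hence "a > 0" using h by linarith
    hence "-a/b \<notin> {s<..}" using nc bn' by blast
    moreover have "-a/b > s" using h bn' by (simp add: field_simps)
    ultimately show False by auto
  qed
  then show ?thesis using 1 False by linarith
qed


definition BalS :: "nat \<Rightarrow> (nat \<Rightarrow> ereal) \<Rightarrow> (nat \<Rightarrow> real) \<Rightarrow> bool" where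
  "BalS r0 R g \<longleftrightarrow> (SUP k\<in>{k. k<r0 \<and> g k < 0}. R k) = (SUP k\<in>{k. k<r0 \<and> g k > 0}. R k)"

lemma bal_union:
  assumes "BalS r0 R g1" "BalS r0 R g2"
    and "\<forall>j<r0. g j > 0 \<longleftrightarrow> g1 j > 0 \<or> g2 j > 0"
    and "\<forall>j<r0. g j < 0 \<longleftrightarrow> g1 j < 0 \<or> g2 j < 0"
  shows "BalS r0 R g"
proof -
  have e1: "{k. k<r0 \<and> g k < 0} = {k. k<r0 \<and> g1 k < 0} \<union> {k. k<r0 \<and> g2 k < 0}"
    using assms(4) by auto
  have e2: "{k. k<r0 \<and> g k > 0} = {k. k<r0 \<and> g1 k > 0} \<union> {k. k<r0 \<and> g2 k > 0}"
    using assms(3) by auto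
  show ?thesis using assms(1,2) unfolding BalS_def e1 e2 SUP_union by simp
qed

lemma dotp_lin: "dotp s0 (\<lambda>i. x * th1 i + y * th2 i) z = x * dotp s0 th1 z + y * dotp s0 th2 z"
  by (simp add: dotp_def sum.distrib sum_distrib_left algebra_simps)

lemma dotp_sub: "dotp s0 (\<lambda>i. th1 i - y * th2 i) z = dotp s0 th1 z - y * dotp s0 th2 z"
  by (simp add: dotp_def sum_subtractf sum_distrib_left algebra_simps)

lemma balance_iff: "balance s0 r0 nu nu' alpha beta th \<longleftrightarrow>
   BalS r0 (\<lambda>k. ereal (rho s0 nu alpha beta k)) (\<lambda>j. dotp s0 th (zeta nu nu' j))"
  unfolding balance_def BalS_def Gamma_plus_def Gamma_minus_def by simp

theorem lemma3p10:
  fixes s0 r0 :: nat and nu nu' :: "nat \<Rightarrow> nat \<Rightarrow> nat"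
    and alpha beta \<theta>1 \<theta>2 :: "nat \<Rightarrow> real"
  assumes "s0 \<ge> 1" and "r0 \<ge> 1"
    and "\<forall>i<s0. alpha i \<ge> 0"
    and "\<forall>i<s0. \<theta>1 i \<ge> 0" and "\<forall>i<s0. \<theta>2 i \<ge> 0"
    and "balance s0 r0 nu nu' alpha beta \<theta>1"
    and "balance s0 r0 nu nu' alpha beta \<theta>2"
    and "\<forall>k \<in> (Gamma_plus s0 r0 nu nu' \<theta>1 \<inter> Gamma_minus s0 r0 nu nu' \<theta>2)
               \<union> (Gamma_minus s0 r0 nu nu' \<theta>1 \<inter> Gamma_plus s0 r0 nu nu' \<theta>2).
           balance s0 r0 nu nu' alpha beta
             (\<lambda>i. \<theta>1 i - (dotp s0 \<theta>1 (zeta nu nu' k) / dotp s0 \<theta>2 (zeta nu nu' k)) * \<theta>2 i)"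
  shows "\<forall>c1 c2 :: real. c1 > 0 \<longrightarrow> c2 > 0 \<longrightarrow>
           balance s0 r0 nu nu' alpha beta (\<lambda>i. c1 * \<theta>1 i + c2 * \<theta>2 i)"
proof (intro allI impI)
  fix c1 c2 :: real assume c1: "c1 > 0" and c2: "c2 > 0"
  define R where "R k = ereal (rho s0 nu alpha beta k)" for k
  define a where "a j = dotp s0 \<theta>1 (zeta nu nu' j)" for j
  define b where "b j = dotp s0 \<theta>2 (zeta nu nu' j)" for j
  define M where "M = {k. k<r0 \<and> (a k > 0 \<and> b k < 0 \<or> a k < 0 \<and> b k > 0)}"
  define C where "C = (\<lambda>k. - a k / b k) ` M"
  have finC: "finite C" unfolding C_def M_def by simp
  have Cpos: "x > 0" if "x \<in> C" for x
    using that unfolding C_def M_def by (auto simp: divide_pos_neg divide_neg_pos)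
  have inC: "- a j / b j \<in> C" if "j < r0" "a j > 0 \<and> b j < 0 \<or> a j < 0 \<and> b j > 0" for j
    using that unfolding C_def M_def by auto
  have HM: "BalS r0 R (\<lambda>j. a j + x * b j)" if "x \<in> C" for x
  proof -
    obtain k where k: "k \<in> M" "x = - a k / b k" using \<open>x \<in> C\<close> unfolding C_def by auto
    have "k \<in> (Gamma_plus s0 r0 nu nu' \<theta>1 \<inter> Gamma_minus s0 r0 nu nu' \<theta>2)
               \<union> (Gamma_minus s0 r0 nu nu' \<theta>1 \<inter> Gamma_plus s0 r0 nu nu' \<theta>2)"
      using k(1) unfolding M_def Gamma_plus_def Gamma_minus_def a_def b_def by auto
    with assms(8) have "balance s0 r0 nu nu' alpha beta
             (\<lambda>i. \<theta>1 i - (a k / b k) * \<theta>2 i)" unfolding a_def b_def by blast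
    then show ?thesis unfolding balance_iff dotp_sub R_def[symmetric] a_def[symmetric]
        b_def[symmetric] k(2) by simp
  qed
  have H1: "BalS r0 R (\<lambda>j. a j + 0 * b j)"
    using assms(6) unfolding balance_iff R_def[symmetric] a_def[symmetric] by simp
  have H2: "BalS r0 R b"
    using assms(7) unfolding balance_iff R_def[symmetric] b_def[symmetric] by simp
  have main: "BalS r0 R (\<lambda>j. a j + t * b j)" if tpos: "t > 0" for t
  proof (cases "t \<in> C")
    case True then show ?thesis using HM by blast
  next
    case tnC: False
    define L where "L = {x\<in>C. x < t}"
    define s where "s = (if L = {} then 0 else Max L)"
    have finL: "finite L" using finC unfolding L_def by simp
    have s0: "0 \<le> s" and st: "s < t"
      using Cpos tpos finL Max_in[of L] unfolding s_def L_def by (auto, fastforce+)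
    have Hs: "BalS r0 R (\<lambda>j. a j + s * b j)"
    proof (cases "L = {}")
      case True then show ?thesis using H1 unfolding s_def by simp
    next
      case False
      then have "s \<in> L" unfolding s_def using finL Max_in by auto
      then show ?thesis using HM unfolding L_def by blast
    qed
    have belowL: "x \<le> s" if "x \<in> C" "x < t" for x
      using that finL Max_ge[of L x] unfolding s_def L_def by auto
    define U where "U = {x\<in>C. x > t}"
    have finU: "finite U" using finC unfolding U_def by simp
    show ?thesis
    proof (cases "U = {}")
      case True
      have nc: "- a j / b j \<notin> {s<..}"
        if "j < r0" "a j > 0 \<and> b j < 0 \<or> a j < 0 \<and> b j > 0" for j
      proof
        assume "- a j / b j \<in> {s<..}"
        moreover have x: "- a j / b j \<in> C" using inC that by blast
        ultimately show False using belowL[OF x] True tnC unfolding U_def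
          by (metis (mono_tags, lifting) empty_iff greaterThan_iff linorder_neqE_linordered_idom
              mem_Collect_eq not_le)
      qed
      show ?thesis
      proof (rule bal_union[OF Hs H2]; intro allI impI)
        fix j assume j: "j < r0"
        show "a j + t * b j > 0 \<longleftrightarrow> a j + s * b j > 0 \<or> b j > 0"
          using step_inf[OF s0 st nc[OF j]] by blast
        have "- a j + t * - b j > 0 \<longleftrightarrow> - a j + s * - b j > 0 \<or> - b j > 0"
          using step_inf[OF s0 st, of "- a j" "- b j"] nc[OF j] by auto
        then show "a j + t * b j < 0 \<longleftrightarrow> a j + s * b j < 0 \<or> b j < 0" by auto
      qed
    next
      case False
      define u where "u = Min U"
      have uU: "u \<in> U" using False finU Min_in unfolding u_def by auto
      have tu: "t < u" using uU unfolding U_def by auto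
      have Hu: "BalS r0 R (\<lambda>j. a j + u * b j)" using uU HM unfolding U_def by blast
      have aboveU: "u \<le> x" if "x \<in> C" "x > t" for x
        using that finU Min_le[of U x] unfolding u_def U_def by auto
      have nc: "- a j / b j \<notin> {s<..<u}"
        if "j < r0" "a j > 0 \<and> b j < 0 \<or> a j < 0 \<and> b j > 0" for j
      proof
        assume "- a j / b j \<in> {s<..<u}"
        moreover have x: "- a j / b j \<in> C" using inC that by blast
        ultimately show False using belowL[OF x] aboveU[OF x] tnC
          by (metis greaterThanLessThan_iff linorder_neqE_linordered_idom not_le)
      qed
      show ?thesis
      proof (rule bal_union[OF Hs Hu]; intro allI impI)
        fix j assume j: "j < r0"
        show "a j + t * b j > 0 \<longleftrightarrow> a j + s * b j > 0 \<or> a j + u * b j > 0"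
          using step_fin[OF s0 st tu nc[OF j]] by blast
        have "- a j + t * - b j > 0 \<longleftrightarrow> - a j + s * - b j > 0 \<or> - a j + u * - b j > 0"
          using step_fin[OF s0 st tu, of "- a j" "- b j"] nc[OF j] by auto
        then show "a j + t * b j < 0 \<longleftrightarrow> a j + s * b j < 0 \<or> a j + u * b j < 0" by auto
      qed
    qed
  qed
  have Ht: "BalS r0 R (\<lambda>j. a j + (c2/c1) * b j)" using main[of "c2/c1"] c1 c2 by simp
  have "BalS r0 R (\<lambda>j. c1 * a j + c2 * b j)"
  proof (rule bal_union[OF Ht Ht]; intro allI impI)
    fix j
    have e: "c1 * a j + c2 * b j = c1 * (a j + (c2/c1) * b j)" using c1 by (simp add: field_simps)
    show "c1 * a j + c2 * b j > 0 \<longleftrightarrow> a j + (c2/c1) * b j > 0 \<or> a j + (c2/c1) * b j > 0"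
      unfolding e using c1 by (simp add: zero_less_mult_iff)
    show "c1 * a j + c2 * b j < 0 \<longleftrightarrow> a j + (c2/c1) * b j < 0 \<or> a j + (c2/c1) * b j < 0"
      unfolding e using c1 by (simp add: mult_less_0_iff)
  qed
  then show "balance s0 r0 nu nu' alpha beta (\<lambda>i. c1 * \<theta>1 i + c2 * \<theta>2 i)"
    unfolding balance_iff dotp_lin R_def[symmetric] a_def[symmetric] b_def[symmetric] .
qed

end
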